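(* Let $M=(\mathit{AP}_f,S,T,V,\{\sim_o\}_{o\in\mathit{Obs}},s_\iota,o_\iota)$ be a model and $\Phi$ a CTL*KΔ formula. Let $M'$ and $\Phi'=\mathrm{tr}_{o_\iota}(\Phi)$ be as defined in the context. Then $M\models\Phi$ if and only if $M'\models\Phi'$.
   Context: Fix a countably infinite set $\mathit{AP}$ of atomic propositions and a finite nonempty set $\mathit{Obs}$ of observations. For a word $w$ we write $w_i$ for its letter at position $i$ (positions start at $0$), $w_{\le i}$ for its prefix ending at position $i$, $|w|$ for the length of a finite word, and $\mathit{last}(w)$ for the last letter of a finite word; $w\preceq w'$ means $w$ is a prefix of $w'$. Syntax of CTL*KΔ (single agent): history formulas $\varphi::=p\mid\neg\varphi\mid\varphi\wedge\varphi\mid\mathbf A\psi\mid\mathbf K\varphi\mid\Delta^{o}\varphi$ and path formulas $\psi::=\varphi\mid\neg\psi\mid\psi\wedge\psi\mid\mathbf X\psi\mid\psi\,\mathbf U\,\psi$, with $p\in\mathit{AP}$ and $o\in\mathit{Obs}$; the formulas of the logic are the history formulas. CTL*K is the fragment without $\Delta^o$. Abbreviations: $\top=p\vee\neg p$, $\vee,\to$ as usual, $\mathbf F\psi=\top\mathbf U\psi$, $\mathbf G\psi=\neg\mathbf F\neg\psi$. A model is $M=(\mathit{AP}_f,S,T,V,\{\sim_o\}_{o\in O},s_\iota,o_\iota)$ over some finite observation set $O$ (here $O=\mathit{Obs}$ unless stated otherwise), where $\mathit{AP}_f\subseteq\mathit{AP}$ is finite, $S$ is a finite set of states, $T\subseteq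 S\times S$ is left-total, $V:S\to 2^{\mathit{AP}_f}$, each $\sim_o$ is an equivalence relation on $S$, $s_\iota\in S$ and $o_\iota\in O$. A path is an infinite sequence $\pi=s_0s_1\dots$ of states with $s_i\,T\,s_{i+1}$ for all $i$ (starting at any state); a history is a finite nonempty prefix of a path. An observation record is a finite word over $O\times\mathbb N$; $\epsilon$ is the empty record, $r\cdot(o,n)$ is $r$ with $(o,n)$ appended, and $r_{=n}$ is the subword of $r$ consisting of the pairs whose second component is $n$. The list $\mathit{ol}(r,n)$ is defined by $\mathit{ol}(r,0)=o_\iota\cdot o_1\cdots o_k$ if $r_{=0}=(o_1,0)\cdots(o_k,0)$, and $\mathit{ol}(r,n+1)=\mathit{last}(\mathit{ol}(r,n))\cdot o_1\cdots o_k$ if $r_{=n+1}=(o_1,n+1)\cdots(o_k,n+1)$. Two histories are equivalent, $h\approx_r h'$, if $|h|=|h'|$ and for every $i<|h|$ and every $o$ occurring in $\mathit{ol}(r,i)$, $h_i\sim_o h'_i$. Natural semantics: for a history $h$ and record $r$: $h,r\models p$ iff $p\in V(\mathit{last}(h))$; $h,r\models\neg\varphi$ iff not $h,r\models\varphi$; $h,r\models\varphi_1\wedge\varphi_2$ iff both hold; $h,r\models\mathbf A\psi$ iff for all paths $\pi$ with $h\preceq\pi$, $\pi,|h|-1,r\models\psi$; $h,r\models\mathbf K\varphi$ iff $h',r\models\varphi$ for all histories $h'$ with $h'\approx_r h$; $h,r\models\Delta^o\varphi$ iff $h,r\cdot(o,|h|-1)\models\varphi$. For a path $\pi$, $n\in\mathbb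 N$ and record $r$: $\pi,n,r\models\varphi$ iff $\pi_{\le n},r\models\varphi$; negation and conjunction as usual; $\pi,n,r\models\mathbf X\psi$ iff $\pi,n+1,r\models\psi$; $\pi,n,r\models\psi_1\mathbf U\psi_2$ iff there is $m\ge n$ with $\pi,m,r\models\psi_2$ and $\pi,k,r\models\psi_1$ for all $n\le k<m$. $M\models\varphi$ iff $s_\iota,\epsilon\models\varphi$ ($s_\iota$ viewed as a one-state history). Construction of $M'$: for each $o\in\mathit{Obs}$ let $p_o\in\mathit{AP}\setminus\mathit{AP}_f$ be a fresh atomic proposition (pairwise distinct). $M'$ is the model over the one-element observation set $\{*\}$ with propositions $\mathit{AP}_f\cup\{p_o\mid o\in\mathit{Obs}\}$, states $S'=\{s_o\mid s\in S,\ o\in\mathit{Obs}\}$ (one copy $s_o$ of each state per observation), transitions $T'=\{(s_o,s'_o)\mid o\in\mathit{Obs},\ (s,s')\in T\}\cup\{(s_o,s_{o'})\mid s\in S,\ o,o'\in\mathit{Obs},\ o\ne o'\}$, valuation $V'(s_o)=V(s)\cup\{p_o\}$, single equivalence relation $\sim_*=\{(s_o,s'_o)\mid o\in\mathit{Obs},\ s\sim_o s'\}$, initial state $(s_\iota)_{o_\iota}$ and initial observation $*$. Translation $\mathrm{tr}_o$, for $o\in\mathit{Obs}$, defined by induction: $\mathrm{tr}_o(p)=p$; $\mathrm{tr}_o(\neg\varphi)=\neg\mathrm{tr}_o(\varphi)$; $\mathrm{tr}_o(\varphi_1\wedge\varphi_2)=\mathrm{tr}_o(\varphi_1)\wedge\mathrm{tr}_o(\varphi_2)$;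 $\mathrm{tr}_o(\mathbf K\varphi)=\mathbf K\,\mathrm{tr}_o(\varphi)$; $\mathrm{tr}_o(\mathbf A\psi)=\mathbf A(\mathbf G p_o\to\mathrm{tr}_o(\psi))$; $\mathrm{tr}_o(\Delta^{o'}\varphi)=\mathrm{tr}_{o'}(\varphi)$ if $o'=o$ and $\mathrm{tr}_o(\Delta^{o'}\varphi)=\mathbf A\mathbf X(p_{o'}\to\mathrm{tr}_{o'}(\varphi))$ if $o'\ne o$; on path formulas $\mathrm{tr}_o$ commutes with $\neg,\wedge,\mathbf X,\mathbf U$ and applies the history-formula clauses to history subformulas. $\Phi'=\mathrm{tr}_{o_\iota}(\Phi)$, a CTL*K formula. *)

theory Defs
  imports Main "HOL-Library.Countable"
begin

datatype ('ap, 'o) hform =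
    HProp 'ap
  | HNot "('ap, 'o) hform"
  | HAnd "('ap, 'o) hform" "('ap, 'o) hform"
  | HA "('ap, 'o) pform"
  | HK "('ap, 'o) hform"
  | HDelta 'o "('ap, 'o) hform"
and ('ap, 'o) pform =
    PH "('ap, 'o) hform"
  | PNot "('ap, 'o) pform"
  | PAnd "('ap, 'o) pform" "('ap, 'o) pform"
  | PX "('ap, 'o) pform"
  | PU "('ap, 'o) pform" "('ap, 'o) pform"

primrec hatoms :: "('ap, 'o) hform \<Rightarrow> 'ap set"
  and patoms :: "('ap, 'o) pform \<Rightarrow> 'ap set" where
  "hatoms (HProp a) = {a}"
| "hatoms (HNot f) = hatoms f"
| "hatoms (HAnd f g) = hatoms f \<union> hatoms g"
| "hatoms (HA p) = patoms p"
| "hatoms (HK f) = hatoms f"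
| "hatoms (HDelta ob f) = hatoms f"
| "patoms (PH f) = hatoms f"
| "patoms (PNot p) = patoms p"
| "patoms (PAnd p q) = patoms p \<union> patoms q"
| "patoms (PX p) = patoms p"
| "patoms (PU p q) = patoms p \<union> patoms q"

definition hOr :: "('ap,'o) hform \<Rightarrow> ('ap,'o) hform \<Rightarrow> ('ap,'o) hform" where
  "hOr f g = HNot (HAnd (HNot f) (HNot g))"
definition hTop :: "'ap \<Rightarrow> ('ap,'o) hform" where
  "hTop q = hOr (HProp q) (HNot (HProp q))"
definition pOr :: "('ap,'o) pform \<Rightarrow> ('ap,'o) pform \<Rightarrow> ('ap,'o) pform" where
  "pOr f g = PNot (PAnd (PNot f) (PNot g))"
definition pImp :: "('ap,'o) pform \<Rightarrow> ('ap,'o) pform \<Rightarrow> ('ap,'o) pform" where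
  "pImp f g = pOr (PNot f) g"
definition pF :: "'ap \<Rightarrow> ('ap,'o) pform \<Rightarrow> ('ap,'o) pform" where
  "pF q f = PU (PH (hTop q)) f"
definition pG :: "'ap \<Rightarrow> ('ap,'o) pform \<Rightarrow> ('ap,'o) pform" where
  "pG q f = PNot (pF q (PNot f))"

record ('ap, 's, 'o) model =
  APf :: "'ap set"
  St  :: "'s set"
  Tr  :: "('s \<times> 's) set"
  Val :: "'s \<Rightarrow> 'ap set"
  Sim :: "'o \<Rightarrow> ('s \<times> 's) set"
  sI  :: 's
  oI  :: 'o

definition wf_model :: "('ap, 's, 'o) model \<Rightarrow> bool" where
  "wf_model M \<longleftrightarrow> finite (APf M) \<and> finite (St M) \<and> Tr M \<subseteq> St M \<times> St M
     \<and> (\<forall>s\<in>St M. \<exists>s'. (s, s') \<in> Tr M)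
     \<and> (\<forall>s\<in>St M. Val M s \<subseteq> APf M)
     \<and> (\<forall>ob. equiv (St M) (Sim M ob))
     \<and> sI M \<in> St M"

definition is_path :: "('ap, 's, 'o) model \<Rightarrow> (nat \<Rightarrow> 's) \<Rightarrow> bool" where
  "is_path M \<pi> \<longleftrightarrow> (\<forall>i. \<pi> i \<in> St M \<and> (\<pi> i, \<pi> (Suc i)) \<in> Tr M)"

definition is_history :: "('ap, 's, 'o) model \<Rightarrow> 's list \<Rightarrow> bool" where
  "is_history M h \<longleftrightarrow> h \<noteq> [] \<and> (\<exists>\<pi>. is_path M \<pi> \<and> h = map \<pi> [0..<length h])"

type_synonym 'o obsrec = "('o \<times> nat) list"

fun ol :: "'o \<Rightarrow> 'o obsrec \<Rightarrow> nat \<Rightarrow> 'o list" where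
  "ol oi r 0 = oi # map fst (filter (\<lambda>x. snd x = 0) r)"
| "ol oi r (Suc n) = last (ol oi r n) # map fst (filter (\<lambda>x. snd x = Suc n) r)"

definition hequiv :: "('ap, 's, 'o) model \<Rightarrow> 'o obsrec \<Rightarrow> 's list \<Rightarrow> 's list \<Rightarrow> bool" where
  "hequiv M r h h' \<longleftrightarrow> length h = length h' \<and>
     (\<forall>i<length h. \<forall>ob\<in>set (ol (oI M) r i). (h ! i, h' ! i) \<in> Sim M ob)"

primrec hsat :: "('ap, 's, 'o) model \<Rightarrow> 's list \<Rightarrow> 'o obsrec \<Rightarrow> ('ap, 'o) hform \<Rightarrow> bool"
  and psat :: "('ap, 's, 'o) model \<Rightarrow> (nat \<Rightarrow> 's) \<Rightarrow> nat \<Rightarrow> 'o obsrec \<Rightarrow> ('ap, 'o) pform \<Rightarrow> bool" where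
  "hsat M h r (HProp a) = (a \<in> Val M (last h))"
| "hsat M h r (HNot f) = (\<not> hsat M h r f)"
| "hsat M h r (HAnd f g) = (hsat M h r f \<and> hsat M h r g)"
| "hsat M h r (HA p) = (\<forall>\<pi>. is_path M \<pi> \<and> (\<forall>i<length h. \<pi> i = h ! i)
                          \<longrightarrow> psat M \<pi> (length h - 1) r p)"
| "hsat M h r (HK f) = (\<forall>h'. is_history M h' \<and> hequiv M r h h' \<longrightarrow> hsat M h' r f)"
| "hsat M h r (HDelta ob f) = hsat M h (r @ [(ob, length h - 1)]) f"
| "psat M \<pi> n r (PH f) = hsat M (map \<pi> [0..<Suc n]) r f"
| "psat M \<pi> n r (PNot p) = (\<not> psat M \<pi> n r p)"
| "psat M \<pi> n r (PAnd p q) = (psat M \<pi> n r p \<and> psat M \<pi> n r q)"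
| "psat M \<pi> n r (PX p) = psat M \<pi> (Suc n) r p"
| "psat M \<pi> n r (PU p q) = (\<exists>m\<ge>n. psat M \<pi> m r q \<and> (\<forall>k. n \<le> k \<and> k < m \<longrightarrow> psat M \<pi> k r p))"

definition models :: "('ap, 's, 'o) model \<Rightarrow> ('ap, 'o) hform \<Rightarrow> bool" where
  "models M \<phi> \<longleftrightarrow> hsat M [sI M] [] \<phi>"

section \<open>The construction of M' (observation set {*} = unit)\<close>

definition Mprime :: "('obs \<Rightarrow> 'ap) \<Rightarrow> ('ap, 's, 'obs) model \<Rightarrow> ('ap, 's \<times> 'obs, unit) model" where
  "Mprime p M = \<lparr> APf = APf M \<union> range p,
     St = St M \<times> UNIV,
     Tr = {((s, ob), (s', ob)) | s s' ob. (s, s') \<in> Tr M}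
          \<union> {((s, ob), (s, ob')) | s ob ob'. s \<in> St M \<and> ob \<noteq> ob'},
     Val = (\<lambda>(s, ob). Val M s \<union> {p ob}),
     Sim = (\<lambda>_. {((s, ob), (s', ob)) | s s' ob. (s, s') \<in> Sim M ob}),
     sI = (sI M, oI M),
     oI = () \<rparr>"

primrec tr :: "('obs \<Rightarrow> 'ap) \<Rightarrow> 'obs \<Rightarrow> ('ap, 'obs) hform \<Rightarrow> ('ap, unit) hform"
  and trp :: "('obs \<Rightarrow> 'ap) \<Rightarrow> 'obs \<Rightarrow> ('ap, 'obs) pform \<Rightarrow> ('ap, unit) pform" where
  "tr p ob (HProp a) = HProp a"
| "tr p ob (HNot f) = HNot (tr p ob f)"
| "tr p ob (HAnd f g) = HAnd (tr p ob f) (tr p ob g)"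
| "tr p ob (HK f) = HK (tr p ob f)"
| "tr p ob (HA q) = HA (pImp (pG (p ob) (PH (HProp (p ob)))) (trp p ob q))"
| "tr p ob (HDelta ob' f) =
     (if ob' = ob then tr p ob' f
      else HA (PX (pImp (PH (HProp (p ob'))) (PH (tr p ob' f)))))"
| "trp p ob (PH f) = PH (tr p ob f)"
| "trp p ob (PNot q) = PNot (trp p ob q)"
| "trp p ob (PAnd q q') = PAnd (trp p ob q) (trp p ob q')"
| "trp p ob (PX q) = PX (trp p ob q)"
| "trp p ob (PU q q') = PU (trp p ob q) (trp p ob q')"

end

theory Submission
  imports Defs
begin


lemma hist_char:
  assumes tr: "Tr N \<subseteq> St N \<times> St N" and lt: "\<forall>s\<in>St N. \<exists>s'. (s, s') \<in> Tr N"
  shows "is_history N h \<longleftrightarrow> h \<noteq> [] \<and> last h \<in> St N \<and> successively (\<lambda>a b. (a,b) \<in> Tr N) h"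
proof
  assume "is_history N h"
  then obtain \<pi> where h: "h \<noteq> []" "is_path N \<pi>" "h = map \<pi> [0..<length h]"
    unfolding is_history_def by blast
  have "last h = \<pi> (length h - 1)" using h(1) by (subst h(3)) (simp add: last_map)
  moreover have "successively (\<lambda>a b. (a,b) \<in> Tr N) h"
    unfolding successively_conv_nth
  proof (intro allI impI)
    fix i assume "Suc i < length h"
    then show "(h ! i, h ! Suc i) \<in> Tr N" using h(2) unfolding is_path_def
      by (subst (1 2) h(3)) simp
  qed
  ultimately show "h \<noteq> [] \<and> last h \<in> St N \<and> successively (\<lambda>a b. (a,b) \<in> Tr N) h"
    using h unfolding is_path_def by auto
next
  assume a: "h \<noteq> [] \<and> last h \<in> St N \<and> successively (\<lambda>a b. (a,b) \<in> Tr N) h"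
  define f where "f s = (SOME s'. (s, s') \<in> Tr N)" for s
  have f: "s \<in> St N \<Longrightarrow> (s, f s) \<in> Tr N" for s using lt unfolding f_def by (meson someI_ex)
  have fi: "(f ^^ k) (last h) \<in> St N" for k
    by (induction k) (use a f tr in auto)
  define n where "n = length h - 1"
  define \<pi> where "\<pi> i = (if i < n then h ! i else (f ^^ (i - n)) (last h))" for i
  have hn: "h ! n = last h" using a unfolding n_def by (simp add: last_conv_nth)
  have sn: "Suc i < length h \<Longrightarrow> (h ! i, h ! Suc i) \<in> Tr N" for i
    using a successively_nth by fastforce
  have p: "is_path N \<pi>" unfolding is_path_def
  proof
    fix i
    show "\<pi> i \<in> St N \<and> (\<pi> i, \<pi> (Suc i)) \<in> Tr N"
    proof (cases "Suc i < n")
      case True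
      then show ?thesis using sn[of i] tr unfolding \<pi>_def n_def by force
    next
      case False
      show ?thesis
      proof (cases "Suc i = n")
        case True
        then show ?thesis using sn[of i] tr hn a unfolding \<pi>_def n_def by force
      next
        case False
        then have "Suc i - n = Suc (i - n)" "\<not> i < n" using \<open>\<not> Suc i < n\<close> by auto
        then show ?thesis using fi f \<open>\<not> Suc i < n\<close> unfolding \<pi>_def by auto
      qed
    qed
  qed
  have "h = map \<pi> [0..<length h]"
  proof (rule nth_equalityI)
    fix i assume "i < length h"
    then have "i < n \<or> i = n" unfolding n_def by linarith
    then show "h ! i = map \<pi> [0..<length h] ! i" using hn \<open>i < length h\<close> by (auto simp: \<pi>_def)
  qed simp
  then show "is_history N h" unfolding is_history_def using a p by blast
qed

lemma path_hist: "is_path N \<pi> \<Longrightarrow> is_history N (map \<pi> [0..<Suc k])"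
  unfolding is_history_def by (intro conjI exI[of _ \<pi>]) auto

lemma hist_path: "is_history N h \<Longrightarrow> \<exists>\<pi>. is_path N \<pi> \<and> (\<forall>i<length h. \<pi> i = h ! i)"
  unfolding is_history_def by (metis add_0 diff_zero nth_map_upt)


lemma psat_pImp[simp]: "psat N \<pi> n r (pImp a b) \<longleftrightarrow> (psat N \<pi> n r a \<longrightarrow> psat N \<pi> n r b)"
  by (auto simp: pImp_def pOr_def)

lemma hsat_hTop[simp]: "hsat N h r (hTop q)"
  by (auto simp: hTop_def hOr_def)

lemma psat_pG[simp]: "psat N \<pi> n r (pG q f) \<longleftrightarrow> (\<forall>m\<ge>n. psat N \<pi> m r f)"
  by (auto simp: pG_def pF_def)

lemma Mp_simps[simp]:
  "St (Mprime p M) = St M \<times> UNIV"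
  "Val (Mprime p M) = (\<lambda>(s, ob). Val M s \<union> {p ob})"
  "Sim (Mprime p M) u = {((s, ob), (s', ob)) | s s' ob. (s, s') \<in> Sim M ob}"
  "sI (Mprime p M) = (sI M, oI M)"
  "oI (Mprime p M) = ()"
  by (simp_all add: Mprime_def)

lemma Mp_Tr: "((a,c),(b,c')) \<in> Tr (Mprime p M) \<longleftrightarrow>
   (c = c' \<and> (a,b) \<in> Tr M) \<or> (a = b \<and> a \<in> St M \<and> c \<noteq> c')"
  by (auto simp: Mprime_def)

lemma ol_ne[simp]: "ol oi r i \<noteq> []"
  by (cases i) auto

lemma ol_hd: "hd (ol oi r (Suc i)) = last (ol oi r i)"
  by simp

lemma ol_snoc_lt: "i < n \<Longrightarrow> ol oi (r @ [(ob, n)]) i = ol oi r i"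
  by (induction i) auto

lemma ol_snoc_eq: "ol oi (r @ [(ob, n)]) n = ol oi r n @ [ob]"
  by (cases n) (auto simp: ol_snoc_lt)

lemma ol_beyond: "\<forall>x\<in>set r. snd x \<le> n \<Longrightarrow> n < i \<Longrightarrow> ol oi r i = [last (ol oi r n)]"
proof (induction i)
  case (Suc i)
  have f: "filter (\<lambda>x. snd x = Suc i) r = []" using Suc.prems by (force simp: filter_empty_conv)
  show ?case
  proof (cases "n < i")
    case True then show ?thesis using Suc f by simp
  next
    case False then have "i = n" using Suc by simp
    then show ?thesis using f by simp
  qed
qed simp

lemma ol_unit: "ol () [] i = [()]"
  by (induction i) auto

definition cur :: "'o \<Rightarrow> 'o obsrec \<Rightarrow> nat \<Rightarrow> 'o" where
  "cur oi r i = last (ol oi r i)"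

definition blk :: "'o \<Rightarrow> 'o obsrec \<Rightarrow> nat \<Rightarrow> 'o list" where
  "blk oi r i = remdups_adj (ol oi r i)"

definition expand :: "'o \<Rightarrow> 'o obsrec \<Rightarrow> 's list \<Rightarrow> ('s \<times> 'o) list" where
  "expand oi r h = concat (map (\<lambda>i. map (\<lambda>c. (h ! i, c)) (blk oi r i)) [0..<length h])"

lemma blk_ne[simp]: "blk oi r i \<noteq> []" by (simp add: blk_def)

lemma exp_Nil[simp]: "expand oi r [] = []" by (simp add: expand_def)

lemma exp_snoc: "expand oi r (h @ [s]) = expand oi r h @ map (\<lambda>c. (s, c)) (blk oi r (length h))"
  unfolding expand_def
  by (simp, rule arg_cong[where f=concat], rule map_cong) (auto simp: nth_append)

lemma exp_len: "length h \<le> length (expand oi r h)"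
proof (induction h rule: rev_induct)
  case (snoc x xs)
  have "length (blk oi r (length xs)) \<ge> 1" using blk_ne by (metis length_0_conv less_one not_le)
  then show ?case using snoc by (simp add: exp_snoc)
qed simp

lemma exp_ne: "h \<noteq> [] \<Longrightarrow> expand oi r h \<noteq> []"
  using exp_len[of h oi r] by auto

lemma exp_last: "h \<noteq> [] \<Longrightarrow> last (expand oi r h) = (last h, cur oi r (length h - 1))"
proof (induction h rule: rev_induct)
  case (snoc x xs)
  show ?case by (simp add: exp_snoc last_map blk_def cur_def)
qed simp

lemma exp_single: "expand oi [] [s] = [(s, oi)]"
  by (simp add: expand_def blk_def)


lemma blk_junc: "0 < n \<Longrightarrow> hd (blk oi r n) = cur oi r (n - 1)"
  by (cases n) (auto simp: blk_def cur_def)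

lemma blk_dadj: "successively (\<noteq>) (blk oi r n)"
  using distinct_adj_remdups_adj unfolding blk_def distinct_adj_def by blast

lemma stutter:
  "successively (\<lambda>a b. (a, b) \<in> Tr (Mprime p M)) Z \<Longrightarrow> successively (\<noteq>) (map snd Z) \<Longrightarrow>
   Z = map (\<lambda>c. (fst (hd Z), c)) (map snd Z)"
proof (induction Z)
  case (Cons z Z)
  show ?case
  proof (cases Z)
    case Nil then show ?thesis by (cases z) auto
  next
    case (Cons z' Z')
    have "(z, z') \<in> Tr (Mprime p M)" "snd z \<noteq> snd z'" using Cons.prems \<open>Z = z' # Z'\<close> by auto
    then have "fst z = fst z'" by (cases z; cases z') (auto simp: Mp_Tr)
    moreover have "successively (\<noteq>) (map snd Z)" "successively (\<lambda>a b. (a, b) \<in> Tr (Mprime p M)) Z"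
      using Cons.prems \<open>Z = z' # Z'\<close> by auto
    then have zz: "Z = map (\<lambda>c. (fst (hd Z), c)) (map snd Z)"
      using Cons.IH by blast
    ultimately have e: "map (\<lambda>c. (fst (hd (z#Z)), c)) (map snd (z#Z)) = (fst z, snd z) # map (\<lambda>c. (fst (hd Z), c)) (map snd Z)"
      using \<open>Z = z' # Z'\<close> by simp
    show ?thesis by (simp only: e) (metis zz prod.collapse)
  qed
qed simp

locale L =
  fixes M :: "('ap, 's, 'obs) model" and p :: "'obs \<Rightarrow> 'ap"
  assumes wf: "wf_model M" and injp: "inj p" and disj: "range p \<inter> APf M = {}"
begin

abbreviation "M' \<equiv> Mprime p M"
abbreviation "oi \<equiv> oI M"
abbreviation "RR \<equiv> (\<lambda>a b. snd a = snd b \<and> (fst a, fst b) \<in> Sim M (snd a))"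

lemma trM: "Tr M \<subseteq> St M \<times> St M" and ltM: "\<forall>s\<in>St M. \<exists>s'. (s, s') \<in> Tr M"
  using wf unfolding wf_model_def by auto

lemma trM': "Tr M' \<subseteq> St M' \<times> St M'"
  using trM by (auto simp: Mprime_def)

lemma ltM': "\<forall>s\<in>St M'. \<exists>s'. (s, s') \<in> Tr M'"
proof
  fix s assume "s \<in> St M'"
  then obtain a c where "s = (a, c)" "a \<in> St M" by auto
  then obtain b where "(a, b) \<in> Tr M" using ltM by blast
  then show "\<exists>s'. (s, s') \<in> Tr M'" using \<open>s = (a,c)\<close> by (auto simp: Mp_Tr)
qed

lemmas histM = hist_char[OF trM ltM]
lemmas histM' = hist_char[OF trM' ltM']

lemma valM: "a \<in> St M \<Longrightarrow> Val M a \<subseteq> APf M"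
  using wf unfolding wf_model_def by auto

lemma val': "a \<in> St M \<Longrightarrow> x \<notin> range p \<Longrightarrow> x \<in> Val M' (a, c) \<longleftrightarrow> x \<in> Val M a"
  by auto

lemma valp: "a \<in> St M \<Longrightarrow> p ob \<in> Val M' (a, c) \<longleftrightarrow> ob = c"
  using valM[of a] disj injp by (auto dest: injD)

lemma exp_succ: "set h \<subseteq> St M \<Longrightarrow> successively (\<lambda>a b. (a,b) \<in> Tr M) h \<Longrightarrow>
  successively (\<lambda>a b. (a,b) \<in> Tr M') (expand o0 r h)"
proof (induction h rule: rev_induct)
  case (snoc s xs)
  have s: "s \<in> St M" using snoc by auto
  have b: "successively (\<lambda>a b. (a,b) \<in> Tr M') (map (\<lambda>c. (s, c)) (blk o0 r (length xs)))"
    unfolding successively_map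
    by (rule successively_mono[OF blk_dadj]) (use s in \<open>auto simp: Mp_Tr\<close>)
  have j: "(last (expand o0 r xs), hd (map (\<lambda>c. (s, c)) (blk o0 r (length xs)))) \<in> Tr M'"
    if "xs \<noteq> []"
  proof -
    have "(last xs, s) \<in> Tr M" using snoc.prems that by (auto simp: successively_append_iff)
    moreover have "hd (blk o0 r (length xs)) = cur o0 r (length xs - 1)"
      using that by (simp add: blk_junc)
    ultimately show ?thesis using that by (simp add: exp_last hd_map Mp_Tr)
  qed
  show ?case
  proof (cases "xs = []")
    case True then show ?thesis using b exp_snoc[of o0 r "[]" s] by simp
  next
    case False
    have "successively (\<lambda>a b. (a,b) \<in> Tr M') (expand o0 r xs)"
      using snoc by (auto simp: successively_append_iff)
    then show ?thesis using False b j by (simp add: exp_snoc successively_append_iff)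
  qed
qed simp

lemma exp_hist: "is_history M h \<Longrightarrow> is_history M' (expand o0 r h)"
proof -
  assume h: "is_history M h"
  then obtain \<pi> where "is_path M \<pi>" "h = map \<pi> [0..<length h]" unfolding is_history_def by blast
  then have "set h \<subseteq> St M" unfolding is_path_def by (metis (no_types, lifting) ex_map_conv subsetI)
  then show ?thesis using h exp_succ[of h o0 r] exp_ne[of h o0 r] exp_last[of h o0 r]
    unfolding histM histM' by auto
qed

lemma simp'_iff: "(a, b) \<in> Sim M' u \<longleftrightarrow> RR a b"
  by (cases a; cases b) auto

lemma hequiv'_iff: "hequiv M' [] x y \<longleftrightarrow> list_all2 RR x y"
proof -
  have "hequiv M' [] x y \<longleftrightarrow> length x = length y \<and> (\<forall>i<length x. (x!i, y!i) \<in> Sim M' ())"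
    by (simp add: hequiv_def ol_unit)
  then show ?thesis unfolding simp'_iff list_all2_conv_all_nth by simp
qed

lemma exp_fwd: "hequiv M r h h2 \<Longrightarrow> list_all2 RR (expand oi r h) (expand oi r h2)"
proof (induction h arbitrary: h2 rule: rev_induct)
  case Nil then show ?case by (simp add: hequiv_def)
next
  case (snoc s xs)
  have "h2 \<noteq> []" using snoc.prems unfolding hequiv_def by auto
  then obtain ys t where h2: "h2 = ys @ [t]" using rev_exhaust[of h2] by blast
  have l: "length ys = length xs" using snoc.prems h2 unfolding hequiv_def by simp
  have "\<forall>i<length xs. \<forall>ob\<in>set (ol oi r i). (xs!i, ys!i) \<in> Sim M ob"
  proof (intro allI impI ballI)
    fix i ob assume i: "i < length xs" "ob \<in> set (ol oi r i)"
    then have "((xs@[s])!i, (ys@[t])!i) \<in> Sim M ob" using snoc.prems h2 l unfolding hequiv_def by auto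
    then show "(xs!i, ys!i) \<in> Sim M ob" using i l by (simp add: nth_append)
  qed
  then have "hequiv M r xs ys" using l unfolding hequiv_def by simp
  then have 1: "list_all2 RR (expand oi r xs) (expand oi r ys)" using snoc.IH by blast
  have A: "\<forall>i<length (xs@[s]). \<forall>ob\<in>set (ol oi r i). ((xs@[s])!i, h2!i) \<in> Sim M ob"
    using snoc.prems unfolding hequiv_def by blast
  then have "\<forall>ob\<in>set (ol oi r (length xs)). ((xs@[s])!length xs, h2!length xs) \<in> Sim M ob"
    by (metis length_append_singleton lessI)
  then have "\<forall>ob\<in>set (ol oi r (length xs)). (s, t) \<in> Sim M ob"
    using h2 l by (simp add: nth_append)
  then have 2: "list_all2 RR (map (\<lambda>c. (s, c)) (blk oi r (length xs))) (map (\<lambda>c. (t, c)) (blk oi r (length xs)))"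
    by (auto simp: list_all2_map1 list_all2_map2 list_all2_same blk_def)
  show ?case using 1 2 h2 l by (simp add: exp_snoc list_all2_appendI)
qed


lemma exp_bwd: "successively (\<lambda>a b. (a,b) \<in> Tr M') h'' \<Longrightarrow> set h'' \<subseteq> St M' \<Longrightarrow>
  list_all2 RR (expand oi r h) h'' \<Longrightarrow>
  \<exists>h2. h'' = expand oi r h2 \<and> length h2 = length h \<and> successively (\<lambda>a b. (a,b) \<in> Tr M) h2
     \<and> set h2 \<subseteq> St M \<and> (\<forall>i<length h. \<forall>ob\<in>set (ol oi r i). (h!i, h2!i) \<in> Sim M ob)"
proof (induction h arbitrary: h'' rule: rev_induct)
  case Nil then have "h'' = []" by simp then show ?case by (intro exI[of _ "[]"]) simp
next
  case (snoc s xs)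
  define n where "n = length xs"
  define B where "B = map (\<lambda>c. (s, c)) (blk oi r n)"
  have "list_all2 RR (expand oi r xs @ B) h''" using snoc.prems by (simp add: exp_snoc B_def n_def)
  then obtain Y Z where YZ: "h'' = Y @ Z" "list_all2 RR (expand oi r xs) Y" "list_all2 RR B Z"
    unfolding list_all2_append1 by blast
  have sY: "successively (\<lambda>a b. (a,b) \<in> Tr M') Y" "set Y \<subseteq> St M'"
    and sZ: "successively (\<lambda>a b. (a,b) \<in> Tr M') Z" "set Z \<subseteq> St M'"
    using snoc.prems YZ(1) by (auto simp: successively_append_iff)
  obtain h2 where h2: "Y = expand oi r h2" "length h2 = length xs" "successively (\<lambda>a b. (a,b) \<in> Tr M) h2"
     "set h2 \<subseteq> St M" "\<forall>i<length xs. \<forall>ob\<in>set (ol oi r i). (xs!i, h2!i) \<in> Sim M ob"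
    using snoc.IH[OF sY YZ(2)] by (elim exE conjE) (rule that, assumption+)
  have ms: "map snd Z = blk oi r n"
  proof (rule nth_equalityI)
    show "length (map snd Z) = length (blk oi r n)" using YZ(3) list_all2_lengthD B_def by fastforce
    fix i assume "i < length (map snd Z)"
    then show "map snd Z ! i = blk oi r n ! i" using YZ(3) unfolding list_all2_conv_all_nth B_def
      by auto
  qed
  have "successively (\<noteq>) (map snd Z)" using ms blk_dadj by simp
  define t where "t = fst (hd Z)"
  have Zt': "Z = map (\<lambda>c. (t, c)) (blk oi r n)"
    using stutter[OF sZ(1) \<open>successively (\<noteq>) (map snd Z)\<close>] ms unfolding t_def by metis
  have "Z \<noteq> []" using Zt' by (metis blk_ne list.map_disc_iff)
  then have "hd Z \<in> St M'" using sZ(2) by auto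
  then have tS: "t \<in> St M" unfolding t_def by (cases "hd Z") auto
  have sim: "\<forall>c\<in>set (blk oi r n). (s, t) \<in> Sim M c"
    using YZ(3) unfolding Zt' B_def by (auto simp: list_all2_map1 list_all2_map2 list_all2_same)
  have e: "h'' = expand oi r (h2 @ [t])" using YZ(1) h2(1,2) Zt' by (simp add: exp_snoc n_def)
  have succ: "successively (\<lambda>a b. (a,b) \<in> Tr M) (h2 @ [t])"
  proof (cases "h2 = []")
    case True then show ?thesis by (simp only: append_Nil successively.simps)
  next
    case False
    then have "Y \<noteq> []" using h2(1) exp_ne[of h2 oi r] by simp
    then have "(last Y, hd Z) \<in> Tr M'" using snoc.prems(1) YZ(1) \<open>Z \<noteq> []\<close>
      by (auto simp: successively_append_iff)
    moreover have "last Y = (last h2, cur oi r (n - 1))" using h2(1,2) False exp_last n_def by metis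
    moreover have "hd Z = (t, cur oi r (n - 1))" using Zt' h2(2) False
      using blk_junc[of n oi r] by (simp add: hd_map n_def) (metis length_0_conv)
    ultimately have "(last h2, t) \<in> Tr M" by (simp add: Mp_Tr)
    then show ?thesis using h2(3) False by (simp add: successively_append_iff)
  qed
  have simall: "\<forall>i<length (xs @ [s]). \<forall>ob\<in>set (ol oi r i). ((xs @ [s])!i, (h2 @ [t])!i) \<in> Sim M ob"
  proof (intro allI impI ballI)
    fix i ob assume i: "i < length (xs @ [s])" "ob \<in> set (ol oi r i)"
    show "((xs @ [s])!i, (h2 @ [t])!i) \<in> Sim M ob"
    proof (cases "i < length xs")
      case True then show ?thesis using h2(2,5) i by (simp add: nth_append)
    next
      case False then have "i = n" using i n_def by simp
      then show ?thesis using sim i h2(2) n_def by (simp add: nth_append blk_def)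
    qed
  qed
  show ?case using e h2(2,4) succ simall tS by (intro exI[of _ "h2 @ [t]"]) auto
qed

end


lemma hist_set: "is_history N h \<Longrightarrow> set h \<subseteq> St N"
proof -
  assume "is_history N h"
  then obtain \<pi> where "is_path N \<pi>" "h = map \<pi> [0..<length h]" unfolding is_history_def by blast
  then show ?thesis unfolding is_path_def by (metis (no_types, lifting) ex_map_conv subsetI)
qed

lemma exp_ext:
  assumes "\<forall>i<length h. \<pi> i = h ! i" "h \<noteq> []" "n = length h - 1" "\<forall>x\<in>set r. snd x \<le> n" "n \<le> k"
  shows "expand o0 r (map \<pi> [0..<Suc k]) = expand o0 r h @ map (\<lambda>i. (\<pi> i, cur o0 r n)) [Suc n..<Suc k]"
  using assms(5)
proof (induction k rule: nat_induct_at_least)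
  case base
  have "map \<pi> [0..<Suc n] = h" using assms(1-3) by (intro nth_equalityI) auto
  then show ?case by simp
next
  case (Suc k)
  have "blk o0 r (Suc k) = [cur o0 r n]"
    using ol_beyond[OF assms(4), of "Suc k" o0] Suc by (simp add: blk_def cur_def)
  have e1: "map \<pi> [0..<Suc (Suc k)] = map \<pi> [0..<Suc k] @ [\<pi> (Suc k)]" by simp
  have e2: "[Suc n..<Suc (Suc k)] = [Suc n..<Suc k] @ [Suc k]" using Suc by simp
  show ?case unfolding e1 e2 exp_snoc length_map length_upt using Suc.IH \<open>blk o0 r (Suc k) = _\<close>
    by simp
qed

lemma cur_beyond: "\<forall>x\<in>set r. snd x \<le> n \<Longrightarrow> n \<le> k \<Longrightarrow> cur o0 r k = cur o0 r n"
  using ol_beyond[of r n k o0] by (cases "n = k") (auto simp: cur_def)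

lemma phyp:
  assumes "h \<noteq> []" "n = length h - 1" "\<forall>x\<in>set r. snd x \<le> n" "\<forall>i<length h. \<pi> i = h ! i"
    "h' = expand o0 r h" "d = length h' - length h" "ob = cur o0 r n"
    "\<forall>j<length h'. \<pi>' j = h' ! j" "\<forall>j\<ge>length h'. \<pi>' j = (\<pi> (j - d), ob)"
  shows "\<forall>k\<ge>n. map \<pi>' [0..<Suc (k + d)] = expand o0 r (map \<pi> [0..<Suc k]) \<and> cur o0 r k = ob"
proof (intro allI impI conjI)
  fix k assume k: "n \<le> k"
  have lh: "length h' = Suc n + d" using assms(1,2,5,6) exp_len[of h o0 r] by simp
  show "map \<pi>' [0..<Suc (k + d)] = expand o0 r (map \<pi> [0..<Suc k])"
    unfolding exp_ext[OF assms(4,1,2,3) k] assms(5)[symmetric] assms(7)[symmetric]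
  proof (rule nth_equalityI)
    show "length (map \<pi>' [0..<Suc (k + d)]) = length (h' @ map (\<lambda>i. (\<pi> i, ob)) [Suc n..<Suc k])"
      using lh k by simp
    fix j assume j: "j < length (map \<pi>' [0..<Suc (k + d)])"
    show "map \<pi>' [0..<Suc (k + d)] ! j = (h' @ map (\<lambda>i. (\<pi> i, ob)) [Suc n..<Suc k]) ! j"
    proof (cases "j < length h'")
      case True then show ?thesis using j assms(8) by (simp add: nth_append del: upt_Suc)
    next
      case False
      then have "\<pi>' j = (\<pi> (j - d), ob)" using assms(9) by simp
      moreover have "j - d = Suc n + (j - length h')" using False lh by simp
      ultimately show ?thesis using j False lh k by (simp add: nth_append del: upt_Suc)
    qed
  qed
  show "cur o0 r k = ob" using cur_beyond[OF assms(3) k] assms(7) by simp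
qed

context L begin

lemma K_case:
  assumes h: "is_history M h"
  shows "(\<forall>h''. is_history M' h'' \<and> hequiv M' [] (expand oi r h) h'' \<longrightarrow> Q h'') \<longleftrightarrow>
         (\<forall>h2. is_history M h2 \<and> hequiv M r h h2 \<longrightarrow> Q (expand oi r h2))"
proof
  assume a: "\<forall>h''. is_history M' h'' \<and> hequiv M' [] (expand oi r h) h'' \<longrightarrow> Q h''"
  show "\<forall>h2. is_history M h2 \<and> hequiv M r h h2 \<longrightarrow> Q (expand oi r h2)"
    using a exp_hist exp_fwd hequiv'_iff by blast
next
  assume a: "\<forall>h2. is_history M h2 \<and> hequiv M r h h2 \<longrightarrow> Q (expand oi r h2)"
  show "\<forall>h''. is_history M' h'' \<and> hequiv M' [] (expand oi r h) h'' \<longrightarrow> Q h''"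
  proof (intro allI impI)
    fix h'' assume b: "is_history M' h'' \<and> hequiv M' [] (expand oi r h) h''"
    have s: "successively (\<lambda>a b. (a,b) \<in> Tr M') h''" using b histM' by blast
    have st: "set h'' \<subseteq> St M'" using b hist_set by blast
    have l2: "list_all2 RR (expand oi r h) h''" using b hequiv'_iff by blast
    obtain h2 where h2: "h'' = expand oi r h2" "length h2 = length h" "successively (\<lambda>a b. (a,b) \<in> Tr M) h2"
     "set h2 \<subseteq> St M" "\<forall>i<length h. \<forall>ob\<in>set (ol oi r i). (h!i, h2!i) \<in> Sim M ob"
      using exp_bwd[OF s st l2] by (elim exE conjE) (rule that, assumption+)
    have "h \<noteq> []" using h histM by blast
    then have "h2 \<noteq> []" using h2(2) by auto
    then have "is_history M h2" using h2(3,4) histM by auto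
    moreover have "hequiv M r h h2" using h2(2,5) unfolding hequiv_def by simp
    ultimately show "Q h''" using a h2(1) by blast
  qed
qed


lemma path_st: "is_path N \<pi> \<Longrightarrow> \<pi> i \<in> St N" unfolding is_path_def by blast
lemma path_tr: "is_path N \<pi> \<Longrightarrow> (\<pi> i, \<pi> (Suc i)) \<in> Tr N" unfolding is_path_def by blast

lemma tr_same: "(x, y) \<in> Tr M' \<Longrightarrow> snd x = snd y \<Longrightarrow> (fst x, fst y) \<in> Tr M"
  by (cases x; cases y) (auto simp: Mp_Tr)

lemma HA_case:
  assumes h: "is_history M h" and tm: "\<forall>x\<in>set r. snd x < length h"
  and IH: "\<And>\<pi> \<pi>' d. is_path M \<pi> \<Longrightarrow> is_path M' \<pi>' \<Longrightarrow>
     (\<forall>k\<ge>length h - 1. map \<pi>' [0..<Suc (k+d)] = expand oi r (map \<pi> [0..<Suc k]) \<and> cur oi r k = cur oi r (length h - 1)) \<Longrightarrow>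
     (psat M \<pi> (length h - 1) r q \<longleftrightarrow> psat M' \<pi>' (length h - 1 + d) [] (trp p (cur oi r (length h - 1)) q))"
  shows "hsat M h r (HA q) \<longleftrightarrow> hsat M' (expand oi r h) [] (tr p (cur oi r (length h - 1)) (HA q))"
proof -
  define n where "n = length h - 1"
  define h' where "h' = expand oi r h"
  define ob where "ob = cur oi r n"
  define d where "d = length h' - length h"
  have hne: "h \<noteq> []" and lastS: "last h \<in> St M" and hs: "successively (\<lambda>a b. (a,b) \<in> Tr M) h"
    using h histM by auto
  have lh: "length h' = Suc n + d" using hne exp_len[of h oi r] unfolding h'_def d_def n_def by simp
  have lh0: "length h = Suc n" using hne n_def by simp
  have tm': "\<forall>x\<in>set r. snd x \<le> n" using tm n_def by fastforce
  have lasth': "h' ! (n + d) = (h ! n, ob)"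
    using exp_last[OF hne, of oi r] lh hne unfolding h'_def[symmetric] ob_def n_def
    by (metis diff_Suc_1 last_conv_nth list.size(3) nat.distinct(1) plus_nat.simps(2) last_conv_nth[OF hne])
  have h's: "successively (\<lambda>a b. (a,b) \<in> Tr M') h'" using exp_hist[OF h] histM' unfolding h'_def by blast
  have val: "p ob \<in> Val M' (\<pi>' m) \<longleftrightarrow> snd (\<pi>' m) = ob" if pa: "is_path M' \<pi>'" for \<pi>' m
  proof -
    obtain a c where "\<pi>' m = (a, c)" "a \<in> St M" using path_st[OF pa, of m] by (cases "\<pi>' m") auto
    then show ?thesis using valp by auto
  qed
  have rhs: "hsat M' h' [] (tr p ob (HA q)) \<longleftrightarrow> (\<forall>\<pi>'. is_path M' \<pi>' \<and> (\<forall>i<length h'. \<pi>' i = h' ! i) \<longrightarrow>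
     (\<forall>m\<ge>n+d. snd (\<pi>' m) = ob) \<longrightarrow> psat M' \<pi>' (n+d) [] (trp p ob q))"
    using lh val by (auto simp del: upt_Suc simp: upt_Suc_append)
  have lhs: "hsat M h r (HA q) \<longleftrightarrow> (\<forall>\<pi>. is_path M \<pi> \<and> (\<forall>i<length h. \<pi> i = h ! i) \<longrightarrow> psat M \<pi> n r q)"
    using n_def by simp
  show ?thesis
    unfolding lhs h'_def[symmetric] n_def[symmetric] ob_def[symmetric] rhs
  proof (intro iffI allI impI)
    fix \<pi>' assume A: "\<forall>\<pi>. is_path M \<pi> \<and> (\<forall>i<length h. \<pi> i = h ! i) \<longrightarrow> psat M \<pi> n r q"
      and p': "is_path M' \<pi>' \<and> (\<forall>i<length h'. \<pi>' i = h' ! i)" and G: "\<forall>m\<ge>n+d. snd (\<pi>' m) = ob"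
    define \<pi> where "\<pi> k = (if k < length h then h ! k else fst (\<pi>' (k + d)))" for k
    have ext: "\<forall>i<length h. \<pi> i = h ! i" unfolding \<pi>_def by simp
    have beyond: "\<forall>j\<ge>length h'. \<pi>' j = (\<pi> (j - d), ob)"
    proof (intro allI impI)
      fix j assume "length h' \<le> j"
      then have "\<not> j - d < length h" "j - d + d = j" "snd (\<pi>' j) = ob" using lh lh0 G by auto
      then show "\<pi>' j = (\<pi> (j - d), ob)" unfolding \<pi>_def by (cases "\<pi>' j") auto
    qed
    have pt: "(\<pi> i, \<pi> (Suc i)) \<in> Tr M" for i
    proof -
      consider "Suc i < length h" | "Suc i = length h" | "Suc i > length h" by linarith
      then show ?thesis
      proof cases
        case 1 then show ?thesis using successively_nth[OF hs 1] unfolding \<pi>_def by simp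
      next
        case 2
        have "(\<pi>' (n+d), \<pi>' (Suc (n+d))) \<in> Tr M'" using p' path_tr by blast
        moreover have "\<pi>' (n+d) = (h ! n, ob)" using p' lasth' lh by simp
        moreover have "snd (\<pi>' (Suc (n+d))) = ob" using G by simp
        ultimately have "(h ! n, fst (\<pi>' (Suc (n+d)))) \<in> Tr M" using tr_same by fastforce
        then show ?thesis using 2 lh0 unfolding \<pi>_def by simp
      next
        case 3
        have "(\<pi>' (i+d), \<pi>' (Suc (i+d))) \<in> Tr M'" using p' path_tr by blast
        moreover have "snd (\<pi>' (i+d)) = ob" "snd (\<pi>' (Suc (i+d))) = ob" using G 3 lh0 by auto
        ultimately have "(fst (\<pi>' (i+d)), fst (\<pi>' (Suc i + d))) \<in> Tr M" using tr_same by fastforce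
        then show ?thesis using 3 unfolding \<pi>_def by simp
      qed
    qed
    have pM: "is_path M \<pi>" unfolding is_path_def using pt trM by blast
    have hyp: "\<forall>k\<ge>length h - 1. map \<pi>' [0..<Suc (k+d)] = expand oi r (map \<pi> [0..<Suc k]) \<and> cur oi r k = cur oi r (length h - 1)"
      using phyp[OF hne n_def tm' ext h'_def d_def ob_def conjunct2[OF p'] beyond] unfolding n_def ob_def .
    have "psat M \<pi> n r q" using A pM ext by blast
    then show "psat M' \<pi>' (n + d) [] (trp p ob q)" using IH[OF pM conjunct1[OF p'] hyp] unfolding n_def ob_def by simp
  next
    fix \<pi> assume B: "\<forall>\<pi>'. is_path M' \<pi>' \<and> (\<forall>i<length h'. \<pi>' i = h' ! i) \<longrightarrow>
     (\<forall>m\<ge>n+d. snd (\<pi>' m) = ob) \<longrightarrow> psat M' \<pi>' (n+d) [] (trp p ob q)"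
      and pM: "is_path M \<pi> \<and> (\<forall>i<length h. \<pi> i = h ! i)"
    define \<pi>' where "\<pi>' j = (if j < length h' then h' ! j else (\<pi> (j - d), ob))" for j
    have ext': "\<forall>j<length h'. \<pi>' j = h' ! j" unfolding \<pi>'_def by simp
    have beyond: "\<forall>j\<ge>length h'. \<pi>' j = (\<pi> (j - d), ob)" unfolding \<pi>'_def by simp
    have ge: "\<pi>' j = (\<pi> (j - d), ob)" if "j \<ge> n + d" for j
    proof (cases "j = n + d")
      case True
      have "\<pi> n = h ! n" using pM lh0 by simp
      then show ?thesis using True lasth' lh unfolding \<pi>'_def by simp
    next
      case False then show ?thesis using that lh unfolding \<pi>'_def by simp
    qed
    have pt: "(\<pi>' j, \<pi>' (Suc j)) \<in> Tr M'" for j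
    proof (cases "j < n + d")
      case True
      then show ?thesis using successively_nth[OF h's, of j] lh unfolding \<pi>'_def by simp
    next
      case False
      then have "\<pi>' j = (\<pi> (j - d), ob)" "\<pi>' (Suc j) = (\<pi> (Suc (j - d)), ob)"
        using ge[of j] ge[of "Suc j"] by (auto simp: Suc_diff_le)
      then show ?thesis using path_tr[of M \<pi> "j - d"] pM by (simp add: Mp_Tr)
    qed
    have p': "is_path M' \<pi>'" unfolding is_path_def using pt trM' by blast
    have G: "\<forall>m\<ge>n+d. snd (\<pi>' m) = ob" using ge by simp
    have hyp: "\<forall>k\<ge>length h - 1. map \<pi>' [0..<Suc (k+d)] = expand oi r (map \<pi> [0..<Suc k]) \<and> cur oi r k = cur oi r (length h - 1)"
      using phyp[OF hne n_def tm' conjunct2[OF pM] h'_def d_def ob_def ext' beyond] unfolding n_def ob_def .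
    have "psat M' \<pi>' (n+d) [] (trp p ob q)" using B p' ext' G by blast
    then show "psat M \<pi> n r q" using IH[OF conjunct1[OF pM] p' hyp] unfolding n_def ob_def by simp
  qed
qed

end

lemma last_map_upt: "last (map \<pi> [0..<Suc k]) = \<pi> k" by simp

lemma exp_cong: "(\<forall>i<length h. blk o0 r i = blk o0 r' i) \<Longrightarrow> expand o0 r h = expand o0 r' h"
  unfolding expand_def by (rule arg_cong[where f=concat], rule map_cong) auto

lemma exp_delta:
  assumes "h \<noteq> []" "n = length h - 1"
  shows "expand o0 (r @ [(ob, n)]) h = expand o0 r h @ (if ob = cur o0 r n then [] else [(last h, ob)])"
proof -
  obtain xs s where hs: "h = xs @ [s]" using assms(1) rev_exhaust by blast
  have ln: "length xs = n" using hs assms(2) by simp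
  have e1: "expand o0 (r @ [(ob, n)]) xs = expand o0 r xs"
    by (rule exp_cong) (auto simp: blk_def ol_snoc_lt ln)
  obtain ys y where ol: "ol o0 r n = ys @ [y]" using rev_exhaust[of "ol o0 r n"] by auto
  have "blk o0 (r @ [(ob, n)]) n = blk o0 r n @ (if ob = cur o0 r n then [] else [ob])"
    unfolding blk_def ol_snoc_eq ol cur_def using remdups_adj_append_two[of ys y ob] by simp
  then show ?thesis unfolding hs exp_snoc e1 ln by auto
qed

lemma cur_delta: "cur o0 (r @ [(ob, n)]) n = ob"
  by (simp add: cur_def ol_snoc_eq)

context L begin

lemma Delta_case:
  assumes h: "is_history M h" and n: "n = length h - 1"
  and IH: "hsat M h (r @ [(ob, n)]) f \<longleftrightarrow> hsat M' (expand oi (r @ [(ob, n)]) h) [] (tr p ob f)"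
  shows "hsat M h r (HDelta ob f) \<longleftrightarrow> hsat M' (expand oi r h) [] (tr p (cur oi r n) (HDelta ob f))"
proof (cases "ob = cur oi r n")
  case True
  have hne: "h \<noteq> []" using h histM by blast
  show ?thesis using IH True exp_delta[OF hne n, of oi r ob] n by simp
next
  case False
  have hne: "h \<noteq> []" using h histM by blast
  define h' where "h' = expand oi r h"
  define L where "L = length h'"
  have e: "expand oi (r @ [(ob, n)]) h = h' @ [(last h, ob)]"
    using exp_delta[OF hne n, of oi r ob] False h'_def by simp
  have Lpos: "0 < L" using exp_ne[OF hne] L_def h'_def by simp
  have lasth': "h' ! (L - 1) = (last h, cur oi r n)"
    using exp_last[OF hne, of oi r] exp_ne[OF hne, of oi r] n unfolding h'_def[symmetric] L_def
    by (simp add: last_conv_nth)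
  have rhs: "hsat M' h' [] (tr p (cur oi r n) (HDelta ob f)) \<longleftrightarrow>
    (\<forall>\<pi>'. is_path M' \<pi>' \<and> (\<forall>i<L. \<pi>' i = h' ! i) \<longrightarrow>
       p ob \<in> Val M' (\<pi>' L) \<longrightarrow> hsat M' (map \<pi>' [0..<Suc L]) [] (tr p ob f))"
    using False Lpos unfolding L_def by (simp del: upt_Suc add: last_map_upt)
  have mid: "(\<forall>\<pi>'. is_path M' \<pi>' \<and> (\<forall>i<L. \<pi>' i = h' ! i) \<longrightarrow>
       p ob \<in> Val M' (\<pi>' L) \<longrightarrow> hsat M' (map \<pi>' [0..<Suc L]) [] (tr p ob f))
     \<longleftrightarrow> hsat M' (h' @ [(last h, ob)]) [] (tr p ob f)"
  proof
    assume A: "\<forall>\<pi>'. is_path M' \<pi>' \<and> (\<forall>i<L. \<pi>' i = h' ! i) \<longrightarrow>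
       p ob \<in> Val M' (\<pi>' L) \<longrightarrow> hsat M' (map \<pi>' [0..<Suc L]) [] (tr p ob f)"
    have "is_history M' (h' @ [(last h, ob)])" using exp_hist[OF h, of oi "r @ [(ob, n)]"] e by simp
    then obtain \<pi>' where p': "is_path M' \<pi>'" "\<forall>i<Suc L. \<pi>' i = (h' @ [(last h, ob)]) ! i"
      using hist_path L_def by fastforce
    have "\<forall>i<L. \<pi>' i = h' ! i" using p'(2) L_def by (simp add: nth_append)
    moreover have "\<pi>' L = (last h, ob)" using p'(2) L_def by simp
    moreover have "last h \<in> St M" using h histM by blast
    ultimately have "hsat M' (map \<pi>' [0..<Suc L]) [] (tr p ob f)" using A p'(1) valp by auto
    moreover have "map \<pi>' [0..<Suc L] = h' @ [(last h, ob)]"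
      using p'(2) L_def by (intro nth_equalityI) (auto simp del: upt_Suc)
    ultimately show "hsat M' (h' @ [(last h, ob)]) [] (tr p ob f)" by simp
  next
    assume B: "hsat M' (h' @ [(last h, ob)]) [] (tr p ob f)"
    show "\<forall>\<pi>'. is_path M' \<pi>' \<and> (\<forall>i<L. \<pi>' i = h' ! i) \<longrightarrow>
       p ob \<in> Val M' (\<pi>' L) \<longrightarrow> hsat M' (map \<pi>' [0..<Suc L]) [] (tr p ob f)"
    proof (intro allI impI)
      fix \<pi>' assume p': "is_path M' \<pi>' \<and> (\<forall>i<L. \<pi>' i = h' ! i)" and v: "p ob \<in> Val M' (\<pi>' L)"
      obtain a c where ac: "\<pi>' L = (a, c)" "a \<in> St M" using path_st[OF conjunct1[OF p'], of L] by (cases "\<pi>' L") auto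
      then have "c = ob" using v valp by auto
      have tr: "(\<pi>' (L - 1), \<pi>' L) \<in> Tr M'" using path_tr[OF conjunct1[OF p'], of "L - 1"] Lpos by simp
      have "\<pi>' (L - 1) = (last h, cur oi r n)" using p' lasth' Lpos by simp
      then have "a = last h" using tr ac \<open>c = ob\<close> False by (auto simp: Mp_Tr)
      have "map \<pi>' [0..<Suc L] = h' @ [(last h, ob)]"
        using p' ac \<open>c = ob\<close> \<open>a = last h\<close> L_def
        by (intro nth_equalityI) (auto simp del: upt_Suc simp: nth_append less_Suc_eq)
      then show "hsat M' (map \<pi>' [0..<Suc L]) [] (tr p ob f)" using B by simp
    qed
  qed
  show ?thesis unfolding h'_def[symmetric] rhs mid using IH e n by simp
qed

end

lemma U_shift:
  fixes m n0 d :: nat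
  assumes "\<And>m. m \<ge> n0 \<Longrightarrow> A m \<longleftrightarrow> A' (m+d)" "\<And>m. m \<ge> n0 \<Longrightarrow> B m \<longleftrightarrow> B' (m+d)" "m \<ge> n0"
  shows "(\<exists>m'\<ge>m. B m' \<and> (\<forall>k. m \<le> k \<and> k < m' \<longrightarrow> A k)) \<longleftrightarrow>
         (\<exists>m''\<ge>m+d. B' m'' \<and> (\<forall>k. m+d \<le> k \<and> k < m'' \<longrightarrow> A' k))"
proof
  assume "\<exists>m'\<ge>m. B m' \<and> (\<forall>k. m \<le> k \<and> k < m' \<longrightarrow> A k)"
  then obtain m' where m': "m' \<ge> m" "B m'" "\<forall>k. m \<le> k \<and> k < m' \<longrightarrow> A k" by blast
  have "\<forall>k. m+d \<le> k \<and> k < m'+d \<longrightarrow> A' k"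
  proof (intro allI impI)
    fix k assume k: "m+d \<le> k \<and> k < m'+d"
    then have "m \<le> k - d \<and> k - d < m'" by auto
    then have "A (k - d)" using m'(3) by blast
    then show "A' k" using assms(1)[of "k - d"] k assms(3) by auto
  qed
  then show "\<exists>m''\<ge>m+d. B' m'' \<and> (\<forall>k. m+d \<le> k \<and> k < m'' \<longrightarrow> A' k)"
    using m' assms(2)[of m'] assms(3) by (intro exI[of _ "m'+d"]) auto
next
  assume "\<exists>m''\<ge>m+d. B' m'' \<and> (\<forall>k. m+d \<le> k \<and> k < m'' \<longrightarrow> A' k)"
  then obtain m'' where m'': "m'' \<ge> m+d" "B' m''" "\<forall>k. m+d \<le> k \<and> k < m'' \<longrightarrow> A' k" by blast
  have "\<forall>k. m \<le> k \<and> k < m'' - d \<longrightarrow> A k"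
  proof (intro allI impI)
    fix k assume k: "m \<le> k \<and> k < m'' - d"
    then have "A' (k + d)" using m''(3) by auto
    then show "A k" using assms(1)[of k] k assms(3) by auto
  qed
  moreover have "B (m'' - d)" using m'' assms(2)[of "m'' - d"] assms(3) by auto
  ultimately show "\<exists>m'\<ge>m. B m' \<and> (\<forall>k. m \<le> k \<and> k < m' \<longrightarrow> A k)"
    using m''(1) by (intro exI[of _ "m'' - d"]) auto
qed

context L begin

lemma main:
 "(\<forall>h r. is_history M h \<longrightarrow> (\<forall>x\<in>set r. snd x < length h) \<longrightarrow> hatoms \<phi> \<inter> range p = {} \<longrightarrow>
     (hsat M h r \<phi> \<longleftrightarrow> hsat M' (expand oi r h) [] (tr p (cur oi r (length h - 1)) \<phi>)))"
 and "(\<forall>\<pi> \<pi>' r n0 d m. is_path M \<pi> \<longrightarrow> is_path M' \<pi>' \<longrightarrow> (\<forall>x\<in>set r. snd x \<le> n0) \<longrightarrow>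
     (\<forall>k\<ge>n0. map \<pi>' [0..<Suc (k+d)] = expand oi r (map \<pi> [0..<Suc k]) \<and> cur oi r k = cur oi r n0) \<longrightarrow>
     patoms q \<inter> range p = {} \<longrightarrow> n0 \<le> m \<longrightarrow>
     (psat M \<pi> m r q \<longleftrightarrow> psat M' \<pi>' (m+d) [] (trp p (cur oi r n0) q)))"
proof (induction \<phi> and q)
  case (HProp a)
  show ?case
  proof (intro allI impI)
    fix h :: "'s list" and r :: "'obs obsrec" assume h: "is_history M h" and "hatoms (HProp a) \<inter> range p = {}"
    then have a: "a \<notin> range p" by auto
    have "h \<noteq> []" using h histM by blast
    then show "hsat M h r (HProp a) \<longleftrightarrow> hsat M' (expand oi r h) [] (tr p (cur oi r (length h - 1)) (HProp a))"
      using a exp_last[of h oi r] by auto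
  qed
next
  case (HNot f)
  show ?case
  proof (intro allI impI)
    fix h :: "'s list" and r :: "'obs obsrec"
    assume "is_history M h" "\<forall>x\<in>set r. snd x < length h" "hatoms (HNot f) \<inter> range p = {}"
    then show "hsat M h r (HNot f) \<longleftrightarrow> hsat M' (expand oi r h) [] (tr p (cur oi r (length h - 1)) (HNot f))"
      using HNot.IH[rule_format, of h r] by simp
  qed
next
  case (HAnd f g)
  show ?case
  proof (intro allI impI)
    fix h :: "'s list" and r :: "'obs obsrec"
    assume "is_history M h" "\<forall>x\<in>set r. snd x < length h" "hatoms (HAnd f g) \<inter> range p = {}"
    then show "hsat M h r (HAnd f g) \<longleftrightarrow> hsat M' (expand oi r h) [] (tr p (cur oi r (length h - 1)) (HAnd f g))"
      using HAnd.IH(1)[rule_format, of h r] HAnd.IH(2)[rule_format, of h r] by (simp add: Int_Un_distrib2)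
  qed
next
  case (HA q)
  show ?case
  proof (intro allI impI)
    fix h :: "'s list" and r :: "'obs obsrec" assume h: "is_history M h" and tm: "\<forall>x\<in>set r. snd x < length h"
      and at: "hatoms (HA q) \<inter> range p = {}"
    have tm': "\<forall>x\<in>set r. snd x \<le> length h - 1" using tm by fastforce
    show "hsat M h r (HA q) \<longleftrightarrow> hsat M' (expand oi r h) [] (tr p (cur oi r (length h - 1)) (HA q))"
    proof (rule HA_case[OF h tm])
      fix \<pi> \<pi>' d assume pp: "is_path M \<pi>" "is_path M' \<pi>'"
        "\<forall>k\<ge>length h - 1. map \<pi>' [0..<Suc (k+d)] = expand oi r (map \<pi> [0..<Suc k]) \<and> cur oi r k = cur oi r (length h - 1)"
      have atq: "patoms q \<inter> range p = {}" using at by simp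
      show "psat M \<pi> (length h - 1) r q \<longleftrightarrow> psat M' \<pi>' (length h - 1 + d) [] (trp p (cur oi r (length h - 1)) q)"
        by (rule HA.IH[rule_format, OF pp(1,2) tm'[rule_format] pp(3)[rule_format] atq le_refl])
    qed
  qed
next
  case (HK f)
  show ?case
  proof (intro allI impI)
    fix h :: "'s list" and r :: "'obs obsrec" assume h: "is_history M h" and tm: "\<forall>x\<in>set r. snd x < length h"
      and at: "hatoms (HK f) \<inter> range p = {}"
    have "hsat M h r (HK f) \<longleftrightarrow> (\<forall>h2. is_history M h2 \<and> hequiv M r h h2 \<longrightarrow>
        hsat M' (expand oi r h2) [] (tr p (cur oi r (length h - 1)) f))"
    proof -
      have "hsat M h2 r f \<longleftrightarrow> hsat M' (expand oi r h2) [] (tr p (cur oi r (length h - 1)) f)"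
        if "is_history M h2 \<and> hequiv M r h h2" for h2
      proof -
        have "length h2 = length h" using that unfolding hequiv_def by simp
        then have tmh: "\<forall>x\<in>set r. snd x < length h2" using tm by simp
        have atf: "hatoms f \<inter> range p = {}" using at by simp
        show ?thesis using HK.IH[rule_format, OF conjunct1[OF that] tmh[rule_format] atf] \<open>length h2 = length h\<close>
          by simp
      qed
      note X = this
      show ?thesis unfolding hsat.simps
      proof (intro iffI allI impI)
        fix h2 assume A: "\<forall>h'. is_history M h' \<and> hequiv M r h h' \<longrightarrow> hsat M h' r f"
          and B: "is_history M h2 \<and> hequiv M r h h2"
        have "hsat M h2 r f" using A B by blast
        then show "hsat M' (expand oi r h2) [] (tr p (cur oi r (length h - 1)) f)" using X[OF B] by blast
      next
        fix h2 assume A: "\<forall>h2. is_history M h2 \<and> hequiv M r h h2 \<longrightarrow>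
            hsat M' (expand oi r h2) [] (tr p (cur oi r (length h - 1)) f)"
          and B: "is_history M h2 \<and> hequiv M r h h2"
        have "hsat M' (expand oi r h2) [] (tr p (cur oi r (length h - 1)) f)" using A B by blast
        then show "hsat M h2 r f" using X[OF B] by blast
      qed
    qed
    also have "\<dots> \<longleftrightarrow> hsat M' (expand oi r h) [] (tr p (cur oi r (length h - 1)) (HK f))"
      using K_case[OF h, of r "\<lambda>h''. hsat M' h'' [] (tr p (cur oi r (length h - 1)) f)"] by simp
    finally show "hsat M h r (HK f) \<longleftrightarrow> hsat M' (expand oi r h) [] (tr p (cur oi r (length h - 1)) (HK f))" .
  qed
next
  case (HDelta ob f)
  show ?case
  proof (intro allI impI)
    fix h :: "'s list" and r :: "'obs obsrec" assume h: "is_history M h" and tm: "\<forall>x\<in>set r. snd x < length h"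
      and at: "hatoms (HDelta ob f) \<inter> range p = {}"
    have "h \<noteq> []" using h histM by blast
    then have tm2: "\<forall>x\<in>set (r @ [(ob, length h - 1)]). snd x < length h" using tm by auto
    have "hsat M h (r @ [(ob, length h - 1)]) f \<longleftrightarrow>
       hsat M' (expand oi (r @ [(ob, length h - 1)]) h) [] (tr p ob f)"
    proof -
      have atf: "hatoms f \<inter> range p = {}" using at by simp
      show ?thesis using HDelta.IH[rule_format, of h "r @ [(ob, length h - 1)]", OF h tm2[rule_format] atf]
        cur_delta[of oi r ob "length h - 1"] by simp
    qed
    then show "hsat M h r (HDelta ob f) \<longleftrightarrow> hsat M' (expand oi r h) [] (tr p (cur oi r (length h - 1)) (HDelta ob f))"
      using Delta_case[OF h refl] by blast
  qed
next
  case (PH f)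
  show ?case
  proof (intro allI impI)
    fix \<pi> \<pi>' and r :: "'obs obsrec" and n0 d m assume pM: "is_path M \<pi>" and p': "is_path M' \<pi>'" and tm: "\<forall>x\<in>set r. snd x \<le> n0"
      and hyp: "\<forall>k\<ge>n0. map \<pi>' [0..<Suc (k+d)] = expand oi r (map \<pi> [0..<Suc k]) \<and> cur oi r k = cur oi r n0"
      and at: "patoms (PH f) \<inter> range p = {}" and m: "n0 \<le> m"
    have tm2: "\<forall>x\<in>set r. snd x < length (map \<pi> [0..<Suc m])" using tm m by fastforce
    show "psat M \<pi> m r (PH f) \<longleftrightarrow> psat M' \<pi>' (m + d) [] (trp p (cur oi r n0) (PH f))"
    proof -
      have atf: "hatoms f \<inter> range p = {}" using at by simp
      have e0: "map \<pi>' [0..<Suc (m+d)] = expand oi r (map \<pi> [0..<Suc m]) \<and> cur oi r m = cur oi r n0"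
        using hyp m by blast
      note e = conjunct1[OF e0] conjunct2[OF e0]
      have l: "length (map \<pi> [0..<Suc m]) - 1 = m" by simp
      note I = PH.IH[rule_format, of "map \<pi> [0..<Suc m]" r, OF path_hist[OF pM, of m] tm2[rule_format] atf]
      show ?thesis unfolding psat.simps trp.simps e(1) using I unfolding l e(2) .
    qed
  qed
next
  case (PNot q)
  show ?case
  proof (intro allI impI)
    fix \<pi> \<pi>' and r :: "'obs obsrec" and n0 d m assume "is_path M \<pi>" "is_path M' \<pi>'" "\<forall>x\<in>set r. snd x \<le> n0"
      "\<forall>k\<ge>n0. map \<pi>' [0..<Suc (k+d)] = expand oi r (map \<pi> [0..<Suc k]) \<and> cur oi r k = cur oi r n0"
      "patoms (PNot q) \<inter> range p = {}" "n0 \<le> m"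
    note a = this
    have atq: "patoms q \<inter> range p = {}" using a(5) by simp
    show "psat M \<pi> m r (PNot q) \<longleftrightarrow> psat M' \<pi>' (m + d) [] (trp p (cur oi r n0) (PNot q))"
      using PNot.IH[rule_format, OF a(1,2) a(3)[rule_format] a(4)[rule_format] atq a(6)] by simp
  qed
next
  case (PAnd q1 q2)
  show ?case
  proof (intro allI impI)
    fix \<pi> \<pi>' and r :: "'obs obsrec" and n0 d m assume "is_path M \<pi>" "is_path M' \<pi>'" "\<forall>x\<in>set r. snd x \<le> n0"
      "\<forall>k\<ge>n0. map \<pi>' [0..<Suc (k+d)] = expand oi r (map \<pi> [0..<Suc k]) \<and> cur oi r k = cur oi r n0"
      "patoms (PAnd q1 q2) \<inter> range p = {}" "n0 \<le> m"
    note a = this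
    have atq: "patoms q1 \<inter> range p = {}" "patoms q2 \<inter> range p = {}" using a(5) by auto
    show "psat M \<pi> m r (PAnd q1 q2) \<longleftrightarrow> psat M' \<pi>' (m + d) [] (trp p (cur oi r n0) (PAnd q1 q2))"
      using PAnd.IH(1)[rule_format, OF a(1,2) a(3)[rule_format] a(4)[rule_format] atq(1) a(6)]
        PAnd.IH(2)[rule_format, OF a(1,2) a(3)[rule_format] a(4)[rule_format] atq(2) a(6)] by simp
  qed
next
  case (PX q)
  show ?case
  proof (intro allI impI)
    fix \<pi> \<pi>' and r :: "'obs obsrec" and n0 d m assume "is_path M \<pi>" "is_path M' \<pi>'" "\<forall>x\<in>set r. snd x \<le> n0"
      "\<forall>k\<ge>n0. map \<pi>' [0..<Suc (k+d)] = expand oi r (map \<pi> [0..<Suc k]) \<and> cur oi r k = cur oi r n0"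
      "patoms (PX q) \<inter> range p = {}" "n0 \<le> m"
    note a = this
    have atq: "patoms q \<inter> range p = {}" using a(5) by simp
    have m': "n0 \<le> Suc m" using a(6) by simp
    show "psat M \<pi> m r (PX q) \<longleftrightarrow> psat M' \<pi>' (m + d) [] (trp p (cur oi r n0) (PX q))"
      using PX.IH[rule_format, OF a(1,2) a(3)[rule_format] a(4)[rule_format] atq m'] by simp
  qed
next
  case (PU q1 q2)
  show ?case
  proof (intro allI impI)
    fix \<pi> \<pi>' and r :: "'obs obsrec" and n0 d m assume a: "is_path M \<pi>" "is_path M' \<pi>'" "\<forall>x\<in>set r. snd x \<le> n0"
      "\<forall>k\<ge>n0. map \<pi>' [0..<Suc (k+d)] = expand oi r (map \<pi> [0..<Suc k]) \<and> cur oi r k = cur oi r n0"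
      "patoms (PU q1 q2) \<inter> range p = {}" "n0 \<le> m"
    have atq: "patoms q1 \<inter> range p = {}" "patoms q2 \<inter> range p = {}" using a(5) by auto
    have i1: "\<And>m. m \<ge> n0 \<Longrightarrow> psat M \<pi> m r q1 \<longleftrightarrow> psat M' \<pi>' (m+d) [] (trp p (cur oi r n0) q1)"
    proof -
      fix m' :: nat assume "m' \<ge> n0" then show "psat M \<pi> m' r q1 \<longleftrightarrow> psat M' \<pi>' (m'+d) [] (trp p (cur oi r n0) q1)"
        using PU.IH(1)[rule_format, OF a(1,2) a(3)[rule_format] a(4)[rule_format] atq(1)] by blast
    qed
    have i2: "\<And>m. m \<ge> n0 \<Longrightarrow> psat M \<pi> m r q2 \<longleftrightarrow> psat M' \<pi>' (m+d) [] (trp p (cur oi r n0) q2)"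
    proof -
      fix m' :: nat assume "m' \<ge> n0" then show "psat M \<pi> m' r q2 \<longleftrightarrow> psat M' \<pi>' (m'+d) [] (trp p (cur oi r n0) q2)"
        using PU.IH(2)[rule_format, OF a(1,2) a(3)[rule_format] a(4)[rule_format] atq(2)] by blast
    qed
    show "psat M \<pi> m r (PU q1 q2) \<longleftrightarrow> psat M' \<pi>' (m + d) [] (trp p (cur oi r n0) (PU q1 q2))"
      using U_shift[where A="\<lambda>m. psat M \<pi> m r q1" and A'="\<lambda>m. psat M' \<pi>' m [] (trp p (cur oi r n0) q1)"
        and B="\<lambda>m. psat M \<pi> m r q2" and B'="\<lambda>m. psat M' \<pi>' m [] (trp p (cur oi r n0) q2)", OF i1 i2 a(6)] by simp
  qed
qed

end

theorem mainTheorem12: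
  fixes M :: "('ap :: countable, 's, 'obs :: finite) model"
    and p :: "'obs \<Rightarrow> 'ap"
    and \<Phi> :: "('ap, 'obs) hform"
  assumes "infinite (UNIV :: 'ap set)"
    and "wf_model M"
    and "inj p"
    and "range p \<inter> APf M = {}"
    and "range p \<inter> hatoms \<Phi> = {}"
  shows "models M \<Phi> \<longleftrightarrow> models (Mprime p M) (tr p (oI M) \<Phi>)"
proof -
  interpret L M p using assms(2,3,4) by unfold_locales
  have sI: "sI M \<in> St M" using assms(2) unfolding wf_model_def by blast
  have h: "is_history M [sI M]" using sI histM by simp
  have c: "cur (oI M) [] 0 = oI M" by (simp add: cur_def)
  have "hsat M [sI M] [] \<Phi> \<longleftrightarrow> hsat M' (expand (oI M) [] [sI M]) [] (tr p (cur (oI M) [] 0) \<Phi>)"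
    using main(1)[rule_format, OF h, of "[]"] assms(5) by auto
  then show ?thesis unfolding models_def using c exp_single[of "oI M" "sI M"] by simp
qed

end
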